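(* Let $x$ be a real number with $x\notin[-1,1]$. For $n\in\mathbb N$ and integers $d\geq 1$ let $S_{n,d}(x)=\sum_{k=0}^nU_{d-1}(T_{(d+1)^k}(x))\prod_{j=0}^k\frac{1}{U_d(T_{(d+1)^j}(x))}$. Then the limit $\lim_{n+d\rightarrow\infty}S_{n,d}(x)$ exists (i.e. there is a real $L$ such that for every $\varepsilon>0$ there exists $N$ with $|S_{n,d}(x)-L|<\varepsilon$ whenever $n\in\mathbb N$, $d\ge1$, $n+d\geq N$) and it equals $\mathrm{sign}(x)\left(|x|-\sqrt{x^2-1}\right)$, the root closest to zero of $X^2-2xX+1$.
   Context: $T_n$ and $U_n$ denote the Chebyshev polynomials of the first and second kind, defined by $T_0=1$, $T_1=x$, $T_{n+1}=2xT_n-T_{n-1}$ and $U_0=1$, $U_1=2x$, $U_{n+1}=2xU_n-U_{n-1}$ for $n\geq1$. $\mathrm{sign}(x)\in\{\pm1\}$ is the sign of $x$. *)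

theory Defs
  imports Complex_Main
begin

fun chebT :: "nat \<Rightarrow> real \<Rightarrow> real" where
  "chebT 0 x = 1"
| "chebT (Suc 0) x = x"
| "chebT (Suc (Suc n)) x = 2 * x * chebT (Suc n) x - chebT n x"

fun chebU :: "nat \<Rightarrow> real \<Rightarrow> real" where
  "chebU 0 x = 1"
| "chebU (Suc 0) x = 2 * x"
| "chebU (Suc (Suc n)) x = 2 * x * chebU (Suc n) x - chebU n x"

definition S :: "nat \<Rightarrow> nat \<Rightarrow> real \<Rightarrow> real" where
  "S n d x = (\<Sum>k=0..n. chebU (d - 1) (chebT ((d+1)^k) x) *
                 (\<Prod>j=0..k. 1 / chebU d (chebT ((d+1)^j) x)))"

end

theory Submission imports Defs begin

lemma alg1: "(a::real) \<noteq> 0 \<Longrightarrow> p \<noteq> 0 \<Longrightarrow> 2 * ((a+1/a)/2) * ((p*a + 1/(p*a))/2) - (p+1/p)/2 = (p*a*a + 1/(p*a*a))/2"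
  by (simp add: field_simps)

lemma alg2: "(a::real) \<noteq> 0 \<Longrightarrow> p \<noteq> 0 \<Longrightarrow> 2 * ((a+1/a)/2) * (p*a*a - 1/(p*a*a)) - (p*a - 1/(p*a)) = (p*a*a*a - 1/(p*a*a*a))"
  by (simp add: field_simps)

lemma T_param2:
  assumes a: "a \<noteq> 0" and hx: "x = (a+1/a)/2"
  shows "chebT n x = (a^n + 1/a^n)/2 \<and> chebT (Suc n) x = (a^Suc n + 1/a^Suc n)/2"
proof (induction n)
  case 0 then show ?case using hx by simp
next
  case (Suc n)
  have e1: "chebT n x = (a^n+1/a^n)/2" using Suc by blast
  have e2: "chebT (Suc n) x = (a^n*a + 1/(a^n*a))/2" using Suc by (simp add: mult.commute)
  have "chebT (Suc (Suc n)) x = 2 * x * chebT (Suc n) x - chebT n x" by simp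
  also have "\<dots> = 2 * ((a+1/a)/2) * ((a^n*a + 1/(a^n*a))/2) - (a^n+1/a^n)/2"
    by (subst e1, subst e2, subst hx, rule refl)
  also have "\<dots> = (a^n*a*a + 1/(a^n*a*a))/2" using alg1[OF a, of "a^n"] a by simp
  finally have h: "chebT (Suc (Suc n)) x = (a^n*a*a + 1/(a^n*a*a))/2" .
  have "chebT (Suc (Suc n)) x = (a^Suc (Suc n) + 1/a^Suc (Suc n))/2"
    unfolding h by (simp add: mult.commute mult.left_commute)
  then show ?case using Suc by blast
qed

lemma T_param: "a \<noteq> 0 \<Longrightarrow> chebT n ((a + 1/a)/2) = (a^n + 1/a^n)/2"
  using T_param2 by blast

lemma U_param2:
  assumes a: "a \<noteq> 0" and hx: "x = (a+1/a)/2"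
  shows "chebU n x * (a - 1/a) = a^(n+1) - 1/a^(n+1) \<and> chebU (Suc n) x * (a - 1/a) = a^(n+2) - 1/a^(n+2)"
proof (induction n)
  case 0 then show ?case using hx a by (simp add: field_simps power2_eq_square)
next
  case (Suc n)
  have e1: "chebU n x * (a - 1/a) = a^n*a - 1/(a^n*a)" using Suc by (simp add: mult.commute)
  have e2: "chebU (Suc n) x * (a - 1/a) = a^n*a*a - 1/(a^n*a*a)" using Suc by (simp add: numeral_eq_Suc mult.commute mult.left_commute)
  have "chebU (Suc (Suc n)) x * (a - 1/a) = 2*x * (chebU (Suc n) x * (a - 1/a)) - chebU n x * (a - 1/a)"
    by (simp add: algebra_simps)
  also have "\<dots> = 2 * ((a+1/a)/2) * (a^n*a*a - 1/(a^n*a*a)) - (a^n*a - 1/(a^n*a))"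
    by (subst e1, subst e2, subst hx, rule refl)
  also have "\<dots> = a^n*a*a*a - 1/(a^n*a*a*a)" using alg2[OF a, of "a^n"] a by simp
  finally show ?case using Suc by (simp add: numeral_eq_Suc mult.commute mult.left_commute)
qed

lemma U_param: "a \<noteq> 0 \<Longrightarrow> chebU n ((a + 1/a)/2) * (a - 1/a) = a^(n+1) - 1/a^(n+1)"
  using U_param2 by blast

lemma aux: "(p::real) \<noteq> 0 \<Longrightarrow> b \<noteq> 0 \<Longrightarrow> Y \<noteq> 0 \<Longrightarrow> Z \<noteq> 0 \<Longrightarrow> (X/p)/((Y/b)*(Z/(p*b))) = X*(b*b)/(Y*Z)"
  by (simp add: field_simps)
lemma ident: assumes "B \<noteq> 0" "P \<noteq> 0" "B^2 \<noteq> 1" "(P*B)^2 \<noteq> 1"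
  shows "(P - 1/P)/((B-1/B)*(P*B - 1/(P*B))) = 1/(B^2-1) - 1/((P*B)^2-(1::real))"
proof -
  have "B*B \<noteq> 1" using assms(3) by (metis power2_eq_square)
  hence h1: "B*B - 1 \<noteq> 0" by simp
  have "P*B*(P*B) \<noteq> 1" using assms(4) by (metis power2_eq_square)
  hence h2: "P*B*(P*B) - 1 \<noteq> 0" by simp
  have e1: "P - 1/P = (P*P-1)/P" using assms by (simp add: field_simps)
  have e2: "B - 1/B = (B*B-1)/B" using assms by (simp add: field_simps)
  have e3: "P*B - 1/(P*B) = (P*B*(P*B)-1)/(P*B)" using assms by (simp add: field_simps)
  have "(P - 1/P)/((B-1/B)*(P*B - 1/(P*B))) = (P*P-1)*(B*B) / ((B*B-1)*(P*B*(P*B)-1))"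
    unfolding e1 e2 e3 using aux assms h1 h2 by blast
  also have "\<dots> = 1/(B*B-1) - 1/(P*B*(P*B)-1)"
    using h1 h2 by (simp add: field_simps)
  finally show ?thesis by (simp add: power2_eq_square)
qed

lemma gt1_facts:
  fixes B :: real assumes "\<bar>B\<bar> > 1"
  shows "B \<noteq> 0" "B^2 > 1" "B^2 \<noteq> 1" "B - 1/B \<noteq> 0"
proof -
  show "B \<noteq> 0" using assms by auto
  have "B^2 = \<bar>B\<bar>^2" by simp
  also have "\<dots> > 1" using one_less_power[OF assms, of 2] by simp
  finally show b2: "B^2 > 1" .
  thus "B^2 \<noteq> 1" by simp
  show "B - 1/B \<noteq> 0"
  proof
    assume "B - 1/B = 0"
    hence "B*B = 1" using \<open>B \<noteq> 0\<close> by (simp add: field_simps)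
    thus False using b2 by (simp add: power2_eq_square)
  qed
qed

lemma pow_gt1: "\<bar>B::real\<bar> > 1 \<Longrightarrow> m > 0 \<Longrightarrow> \<bar>B^m\<bar> > 1"
  by (simp add: power_abs)

lemma U_at_T:
  fixes a :: real assumes a: "\<bar>a\<bar> > 1" and m: "m > 0"
  shows "chebU e (chebT m ((a+1/a)/2)) = ((a^m)^(e+1) - 1/(a^m)^(e+1)) / (a^m - 1/a^m)"
proof -
  have a0: "a \<noteq> 0" using a by auto
  have bg: "\<bar>a^m\<bar> > 1" using pow_gt1[OF a m] .
  note f = gt1_facts[OF bg]
  have tm: "chebT m ((a+1/a)/2) = (a^m + 1/a^m)/2" using T_param[OF a0] .
  have "chebU e (chebT m ((a+1/a)/2)) * (a^m - 1/a^m) = (a^m)^(e+1) - 1/(a^m)^(e+1)"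
    unfolding tm using U_param[OF f(1), of e] by simp
  thus ?thesis using f(4) by (simp add: field_simps)
qed

lemma prod_formula:
  fixes a :: real assumes a: "\<bar>a\<bar> > 1" and d: "d \<ge> 1"
  shows "(\<Prod>j=0..k. 1 / chebU d (chebT ((d+1)^j) ((a+1/a)/2))) = (a - 1/a) / (a^((d+1)^(Suc k)) - 1/a^((d+1)^(Suc k)))"
proof (induction k)
  case 0
  have "chebU d (chebT 1 ((a+1/a)/2)) = (a^(d+1) - 1/a^(d+1)) / (a - 1/a)"
    using U_at_T[OF a, of 1 d] by simp
  thus ?case by simp
next
  case (Suc k)
  define B where "B = a^((d+1)^(Suc k))"
  have mpos: "(d+1)^(Suc k) > 0" by simp
  have bg: "\<bar>B\<bar> > 1" unfolding B_def using pow_gt1[OF a mpos] .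
  have bg2: "\<bar>B^(d+1)\<bar> > 1" using pow_gt1[OF bg, of "d+1"] by simp
  have pw: "a^((d+1)^(Suc (Suc k))) = B^(d+1)" unfolding B_def
    by (metis power_Suc2 power_mult)
  have U: "chebU d (chebT ((d+1)^(Suc k)) ((a+1/a)/2)) = (B^(d+1) - 1/B^(d+1)) / (B - 1/B)"
    using U_at_T[OF a mpos, of d] unfolding B_def by simp
  have "(\<Prod>j=0..Suc k. 1 / chebU d (chebT ((d+1)^j) ((a+1/a)/2)))
      = (a - 1/a) / (B - 1/B) * ((B - 1/B) / (B^(d+1) - 1/B^(d+1)))"
    using Suc U unfolding B_def by simp
  also have "\<dots> = (a - 1/a) / (B^(d+1) - 1/B^(d+1))"
    using gt1_facts(4)[OF bg] by simp
  finally show ?case unfolding pw .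
qed

definition hh :: "real \<Rightarrow> real" where "hh B = 1/(B^2-1)"

lemma term_formula:
  fixes a :: real assumes a: "\<bar>a\<bar> > 1" and d: "d \<ge> 1"
  shows "chebU (d-1) (chebT ((d+1)^k) ((a+1/a)/2)) * (\<Prod>j=0..k. 1 / chebU d (chebT ((d+1)^j) ((a+1/a)/2)))
     = (a - 1/a) * (hh (a^((d+1)^k)) - hh (a^((d+1)^(Suc k))))"
proof -
  define B where "B = a^((d+1)^k)"
  have mpos: "(d+1)^k > 0" by simp
  have bg: "\<bar>B\<bar> > 1" unfolding B_def using pow_gt1[OF a mpos] .
  have bg2: "\<bar>B^d * B\<bar> > 1" using pow_gt1[OF bg, of "d+1"] by (simp add: mult.commute)
  have bd: "\<bar>B^d\<bar> > 1" using pow_gt1[OF bg, of d] d by simp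
  have "a^((d+1)^(Suc k)) = B^(d+1)" unfolding B_def
    by (metis power_Suc2 power_mult)
  hence pw: "a^((d+1)^(Suc k)) = B^d * B" by (simp add: mult.commute)
  have U: "chebU (d-1) (chebT ((d+1)^k) ((a+1/a)/2)) = (B^d - 1/B^d) / (B - 1/B)"
    using U_at_T[OF a mpos, of "d-1"] d unfolding B_def by simp
  have P: "(\<Prod>j=0..k. 1 / chebU d (chebT ((d+1)^j) ((a+1/a)/2))) = (a - 1/a) / (B^d*B - 1/(B^d*B))"
    using prod_formula[OF a d, of k] unfolding pw .
  have "chebU (d-1) (chebT ((d+1)^k) ((a+1/a)/2)) * (\<Prod>j=0..k. 1 / chebU d (chebT ((d+1)^j) ((a+1/a)/2)))
     = (a - 1/a) * ((B^d - 1/B^d) / ((B - 1/B) * (B^d*B - 1/(B^d*B))))"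
    unfolding U P by simp
  also have "\<dots> = (a - 1/a) * (hh B - hh (B^d*B))"
    unfolding hh_def using ident[OF gt1_facts(1)[OF bg] gt1_facts(1)[OF bd] gt1_facts(3)[OF bg] gt1_facts(3)[OF bg2]]
    by simp
  finally show ?thesis unfolding pw B_def .
qed

lemma S_formula:
  fixes a :: real assumes a: "\<bar>a\<bar> > 1" and d: "d \<ge> 1"
  shows "S n d ((a+1/a)/2) = 1/a - (a - 1/a) * hh (a^((d+1)^(Suc n)))"
proof -
  have "S n d ((a+1/a)/2) = (\<Sum>k=0..n. (a - 1/a) * (hh (a^((d+1)^k)) - hh (a^((d+1)^(Suc k)))))"
    unfolding S_def using term_formula[OF a d] by simp
  also have "\<dots> = (a - 1/a) * (hh a - hh (a^((d+1)^(Suc n))))"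
    by (induction n) (simp_all add: algebra_simps)
  also have "(a - 1/a) * hh a = 1/a"
  proof -
    have "a \<noteq> 0" "a*a - 1 \<noteq> 0" using gt1_facts[OF a] by (auto simp: power2_eq_square)
    thus ?thesis unfolding hh_def by (simp add: field_simps power2_eq_square)
  qed
  hence "(a - 1/a) * (hh a - hh (a^((d+1)^(Suc n)))) = 1/a - (a - 1/a) * hh (a^((d+1)^(Suc n)))"
    by (simp add: algebra_simps)
  finally show ?thesis .
qed

lemma pow_ge: "d \<ge> 1 \<Longrightarrow> (d+1)^(Suc n) \<ge> n + d + (1::nat)"
proof (induction n)
  case (Suc n)
  have "(d+1)^(Suc (Suc n)) = (d+1) * (d+1)^(Suc n)" by simp
  also have "\<dots> \<ge> 2 * (n + d + 1)" using Suc mult_le_mono[of 2 "d+1" "n+d+1" "(d+1)^(Suc n)"] by simp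
  finally show ?case by simp
qed simp

lemma err_bound:
  fixes a :: real assumes a: "\<bar>a\<bar> > 1" and M: "M > 0"
  shows "\<bar>(a - 1/a) * hh (a^M)\<bar> \<le> (\<bar>a - 1/a\<bar> / (2*(\<bar>a\<bar>-1))) / M"
proof -
  define t where "t = \<bar>a\<bar> - 1"
  have t: "t > 0" using a t_def by simp
  have "(a^M)^2 = \<bar>a\<bar>^(2*M)" by (metis power2_abs power_abs power_mult mult.commute)
  also have "\<dots> = (1+t)^(2*M)" unfolding t_def by simp
  also have "\<dots> \<ge> 1 + real (2*M) * t" using Bernoulli_inequality[of t "2*M"] t by simp
  finally have q: "(a^M)^2 - 1 \<ge> 2 * real M * t" by simp
  have pos: "2 * real M * t > 0" using M t by simp
  have qp: "(a^M)^2 - 1 > 0" using q pos by linarith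
  have "\<bar>hh (a^M)\<bar> = 1 / ((a^M)^2 - 1)" unfolding hh_def using qp by simp
  also have "\<dots> \<le> 1 / (2 * real M * t)" using q pos by (simp add: frac_le)
  finally have "\<bar>hh (a^M)\<bar> \<le> 1 / (2 * real M * t)" .
  hence "\<bar>(a - 1/a) * hh (a^M)\<bar> \<le> \<bar>a - 1/a\<bar> * (1 / (2 * real M * t))"
    unfolding abs_mult by (rule mult_left_mono) simp_all
  also have "\<dots> = (\<bar>a - 1/a\<bar> / (2*t)) / M" by simp
  finally show ?thesis unfolding t_def .
qed

lemma choose_a:
  fixes x :: real assumes "x \<notin> {-1..1}"
  obtains a where "\<bar>a\<bar> > 1" "x = (a + 1/a)/2" "1/a = sgn x * (\<bar>x\<bar> - sqrt (x^2 - 1))"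
proof -
  define s where "s = sqrt (x^2 - 1)"
  have x1: "\<bar>x\<bar> > 1" using assms by auto
  hence "x^2 > 1" using one_less_power[of "\<bar>x\<bar>" 2] by simp
  hence s0: "s \<ge> 0" and s2: "s^2 = x^2 - 1" unfolding s_def by simp_all
  show ?thesis
  proof (cases "x > 0")
    case True
    define a where "a = x + s"
    have a1: "a > 1" using True x1 s0 a_def by simp
    have ia: "1/a = x - s"
    proof -
      have h: "a*(x-s) = 1" unfolding a_def using s2 by (simp add: algebra_simps power2_eq_square)
      have "a \<noteq> 0" using a1 by simp
      have "1/a = (a*(x-s))/a" using h by simp
      also have "\<dots> = x-s" using \<open>a \<noteq> 0\<close> by simp
      finally show ?thesis .
    qed
    show ?thesis
      by (rule that[of a]) (use a1 ia True a_def s_def in auto)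
  next
    case False
    hence xn: "x < -1" using x1 by auto
    define a where "a = x - s"
    have a1: "a < -1" using xn s0 a_def by simp
    have ia: "1/a = x + s"
    proof -
      have h: "a*(x+s) = 1" unfolding a_def using s2 by (simp add: algebra_simps power2_eq_square)
      have "a \<noteq> 0" using a1 by simp
      have "1/a = (a*(x+s))/a" using h by simp
      also have "\<dots> = x+s" using \<open>a \<noteq> 0\<close> by simp
      finally show ?thesis .
    qed
    show ?thesis
      by (rule that[of a]) (use a1 ia xn a_def s_def in auto)
  qed
qed

theorem corollary1p2:
  fixes x :: real
  assumes "x \<notin> {-1..1}"
  shows "\<forall>\<epsilon>>0. \<exists>N::nat. \<forall>n d::nat. d \<ge> 1 \<longrightarrow> n + d \<ge> N \<longrightarrow>
           \<bar>S n d x - sgn x * (\<bar>x\<bar> - sqrt (x^2 - 1))\<bar> < \<epsilon>"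
proof (intro allI impI)
  fix \<epsilon> :: real assume e: "\<epsilon> > 0"
  obtain a where a: "\<bar>a\<bar> > 1" and xa: "x = (a + 1/a)/2" and ia: "1/a = sgn x * (\<bar>x\<bar> - sqrt (x^2 - 1))"
    using choose_a[OF assms] by blast
  define C where "C = \<bar>a - 1/a\<bar> / (2*(\<bar>a\<bar>-1))"
  have C0: "C \<ge> 0" unfolding C_def using a by simp
  define N where "N = nat \<lceil>C/\<epsilon>\<rceil> + 1"
  show "\<exists>N::nat. \<forall>n d::nat. d \<ge> 1 \<longrightarrow> n + d \<ge> N \<longrightarrow>
           \<bar>S n d x - sgn x * (\<bar>x\<bar> - sqrt (x^2 - 1))\<bar> < \<epsilon>"
  proof (intro exI allI impI)
    fix n d :: nat assume d: "d \<ge> 1" and nd: "n + d \<ge> N"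
    define M where "M = (d+1)^(Suc n)"
    have MN: "M \<ge> N + 1" using pow_ge[OF d, of n] nd M_def by simp
    have "real M > C/\<epsilon>"
    proof -
      have "C/\<epsilon> \<le> real (nat \<lceil>C/\<epsilon>\<rceil>)" by linarith
      also have "\<dots> < real M" using MN N_def by simp
      finally show ?thesis .
    qed
    hence "C < \<epsilon> * M" using e by (simp add: field_simps)
    hence lt: "C / M < \<epsilon>" using MN by (simp add: field_simps)
    have Sx: "S n d x = 1/a - (a - 1/a) * hh (a^M)"
      by (subst xa) (use S_formula[OF a d, of n] M_def in simp)
    have "S n d x - sgn x * (\<bar>x\<bar> - sqrt (x^2 - 1)) = - ((a - 1/a) * hh (a^M))"
      unfolding Sx ia[symmetric] by simp
    hence "\<bar>S n d x - sgn x * (\<bar>x\<bar> - sqrt (x^2 - 1))\<bar> \<le> C / M"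
      using err_bound[OF a, of M] MN C_def by simp
    thus "\<bar>S n d x - sgn x * (\<bar>x\<bar> - sqrt (x^2 - 1))\<bar> < \<epsilon>" using lt by linarith
  qed
qed
end
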